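(* For every $y\in\mathrm{Cay}$, $[y]=\mathcal{B}(\gamma(y))$. Moreover, for every permutation $\sigma$, $\mathcal{B}(\sigma)=[\sigma^{-1}]$.
   Context: $\mathrm{Cay}_n$ is the set of Cayley permutations of length $n$ (words of positive integers in which every integer from $1$ to the maximum occurs), $\mathrm{WI}_n$ its weakly increasing elements, $\mathrm{Cay}=\bigcup_n\mathrm{Cay}_n$. For $(u,v)\in\mathrm{WI}_n\times\mathrm{Cay}_n$, viewed as a biword with columns $\binom{u(i)}{v(i)}$, the Burge transpose $(u,v)^T$ turns every column $\binom{a}{b}$ into $\binom{b}{a}$ and sorts the columns increasingly by top entry, ties by decreasing bottom entry. For $x\in\mathrm{Cay}_n$, $\gamma(x)$ is the bottom row of $(1\,2\cdots n,\;x)^T$ (a permutation of $[n]$). $x\sim y$ iff $\gamma(x)=\gamma(y)$; $[y]$ is the class of $y$. For a permutation $\pi$ of $[n]$ with descent set $\mathrm{Des}(\pi)=\{i:\pi(i)>\pi(i+1)\}$, let $\mathrm{WI}(\pi)=\{u\in\mathrm{WI}_n:\mathrm{Des}(u)\subseteq\mathrm{Des}(\pi)\}$, where for weakly increasing $u$, $\mathrm{Des}(u)=\{i:u(i)=u(i+1)\}$. For $u\in\mathrm{WI}(\pi)$ the transpose $(u,\pi)^T$ has top row $1\,2\cdots n$; the Fishburn basis $\mathcal{B}(\pi)$ is the set of bottom rows of $(u,\pi)^T$ over all $u\in\mathrm{WI}(\pi)$. *)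

theory Defs
  imports Main "HOL-Library.Product_Lexorder"
begin

(* Words are lists of naturals; position i (1-based in the paper) is list index i-1. *)

definition is_cayley :: "nat list \<Rightarrow> bool" where
  "is_cayley x \<longleftrightarrow> set x = {1..Max (insert 0 (set x))}"

definition Cay_n :: "nat \<Rightarrow> nat list set" where
  "Cay_n n = {x. length x = n \<and> is_cayley x}"

definition Cay :: "nat list set" where
  "Cay = (\<Union>n. Cay_n n)"

definition WI_n :: "nat \<Rightarrow> nat list set" where
  "WI_n n = {u \<in> Cay_n n. sorted u}"

definition is_perm :: "nat list \<Rightarrow> bool" where
  "is_perm p \<longleftrightarrow> distinct p \<and> set p = {1..length p}"

definition perm_inv :: "nat list \<Rightarrow> nat list" where
  "perm_inv p = map (\<lambda>j. Suc (THE i. i < length p \<and> p ! i = j)) [1..<Suc (length p)]"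

(* Burge transpose of a biword (top row, bottom row): swap each column and sort
   columns increasingly by top entry, ties by decreasing bottom entry. *)
definition burge_T :: "nat list \<Rightarrow> nat list \<Rightarrow> nat list \<times> nat list" where
  "burge_T u v =
     (let cols = sort_key (\<lambda>(a, b). (a, - int b)) (zip v u)
      in (map fst cols, map snd cols))"

definition gamma :: "nat list \<Rightarrow> nat list" where
  "gamma x = snd (burge_T [1..<Suc (length x)] x)"

definition cay_class :: "nat list \<Rightarrow> nat list set" where
  "cay_class y = {x \<in> Cay. gamma x = gamma y}"

(* descent sets, 1-based positions *)
definition Des :: "nat list \<Rightarrow> nat set" where
  "Des p = {i. 1 \<le> i \<and> i < length p \<and> p ! (i - 1) > p ! i}"

definition Des_WI :: "nat list \<Rightarrow> nat set" where
  "Des_WI u = {i. 1 \<le> i \<and> i < length u \<and> u ! (i - 1) = u ! i}"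

definition WI_of :: "nat list \<Rightarrow> nat list set" where
  "WI_of p = {u \<in> WI_n (length p). Des_WI u \<subseteq> Des p}"

definition fishburn_basis :: "nat list \<Rightarrow> nat list set" where
  "fishburn_basis p = {snd (burge_T u p) | u. u \<in> WI_of p}"

end

theory Submission imports Defs "HOL-Library.Multiset" begin

definition K :: "nat \<times> nat \<Rightarrow> nat \<times> int" where "K = (\<lambda>(a, b). (a, - int b))"

lemma gamma_eq: "gamma x = map snd (sort_key K (zip x [1..<Suc (length x)]))"
  unfolding gamma_def burge_T_def K_def by (simp add: Let_def)

lemma zip_eq_map: "zip x [1..<Suc (length x)] = map (\<lambda>j. (x!(j-1), j)) [1..<Suc (length x)]"
  by (rule nth_equalityI) (auto simp del: upt_Suc)

lemma perm_len: assumes "distinct \<pi>" "set \<pi> = {1..n}" shows "length \<pi> = n"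
  using distinct_card[OF assms(1)] assms(2) by simp

lemma perm_mset: assumes "distinct \<pi>" "set \<pi> = {1..n}" shows "mset \<pi> = mset [1..<Suc n]"
proof -
  have "set [1..<Suc n] = {1..n}" by auto
  then show ?thesis using assms by (metis distinct_upt set_eq_iff_mset_eq_distinct)
qed

lemma G:
  assumes len: "length x = n" and d: "distinct \<pi>" and s: "set \<pi> = {1..n}"
  shows "gamma x = \<pi> \<longleftrightarrow> sorted (map K (map (\<lambda>j. (x!(j-1), j)) \<pi>))"
proof -
  let ?f = "\<lambda>j. (x!(j-1), j)"
  let ?L = "zip x [1..<Suc n]"
  let ?M = "map ?f \<pi>"
  have L: "?L = map ?f [1..<Suc n]" using zip_eq_map[of x] len by simp
  have ms: "mset ?L = mset ?M" using L perm_mset[OF d s] by (metis mset_map)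
  have inj: "inj_on K (set ?L)" unfolding L K_def by (auto simp: inj_on_def)
  show ?thesis
  proof
    assume g: "gamma x = \<pi>"
    let ?S = "sort_key K ?L"
    have S: "map snd ?S = \<pi>" using g gamma_eq[of x] len by simp
    have "\<forall>p \<in> set ?L. ?f (snd p) = p" unfolding L by (auto simp del: upt_Suc)
    then have "map (?f \<circ> snd) ?S = ?S" by (intro map_idI) (simp del: upt_Suc)
    then have "?S = map ?f (map snd ?S)" by simp
    then have "?S = ?M" using S by (metis map_map)
    then show "sorted (map K ?M)" by (metis sorted_sort_key)
  next
    assume "sorted (map K ?M)"
    then have "sort_key K ?L = ?M" using sort_key_inj_key_eq[OF ms inj] by simp
    then show "gamma x = \<pi>" using gamma_eq[of x] len by (simp add: o_def)
  qed
qed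
lemma gamma_perm: "distinct (gamma x) \<and> set (gamma x) = {1..length x}"
proof -
  have "mset (gamma x) = mset (map snd (zip x [1..<Suc (length x)]))"
    unfolding gamma_eq by (metis mset_map mset_sort)
  also have "map snd (zip x [1..<Suc (length x)]) = [1..<Suc (length x)]"
    by (simp del: upt_Suc)
  finally have m: "mset (gamma x) = mset [1..<Suc (length x)]" .
  then have "distinct (gamma x)" by (metis distinct_upt mset_eq_imp_distinct_iff)
  moreover have "set (gamma x) = {1..length x}" using m by (metis atLeastLessThanSuc_atLeastAtMost set_mset_mset set_upt)
  ultimately show ?thesis by simp
qed

lemma sortedK:
  assumes l: "length u = length \<pi>" and d: "distinct \<pi>"
  shows "sorted (map K (zip u \<pi>)) \<longleftrightarrow> sorted u \<and> Des_WI u \<subseteq> Des \<pi>"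
proof -
  have ne: "\<And>i. Suc i < length \<pi> \<Longrightarrow> \<pi>!i \<noteq> \<pi>!Suc i" using d by (simp add: nth_eq_iff_index_eq)
  have "sorted (map K (zip u \<pi>)) \<longleftrightarrow> (\<forall>i. Suc i < length \<pi> \<longrightarrow> u!i < u!Suc i \<or> (u!i = u!Suc i \<and> \<pi>!Suc i \<le> \<pi>!i))"
    unfolding sorted_iff_nth_Suc using l by (auto simp: K_def less_eq_prod_def)
  also have "\<dots> \<longleftrightarrow> (\<forall>i. Suc i < length \<pi> \<longrightarrow> u!i \<le> u!Suc i) \<and> (\<forall>i. Suc i < length \<pi> \<longrightarrow> u!i = u!Suc i \<longrightarrow> \<pi>!Suc i < \<pi>!i)"
  proof -
    have "\<And>i. Suc i < length \<pi> \<Longrightarrow> (u!i < u!Suc i \<or> (u!i = u!Suc i \<and> \<pi>!Suc i \<le> \<pi>!i)) \<longleftrightarrow> (u!i \<le> u!Suc i \<and> (u!i = u!Suc i \<longrightarrow> \<pi>!Suc i < \<pi>!i))"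
    proof -
      fix i assume "Suc i < length \<pi>"
      then have "\<pi>!i \<noteq> \<pi>!Suc i" using ne by blast
      then show "(u!i < u!Suc i \<or> (u!i = u!Suc i \<and> \<pi>!Suc i \<le> \<pi>!i)) \<longleftrightarrow> (u!i \<le> u!Suc i \<and> (u!i = u!Suc i \<longrightarrow> \<pi>!Suc i < \<pi>!i))"
        by auto
    qed
    then show ?thesis by blast
  qed
  also have "\<dots> \<longleftrightarrow> sorted u \<and> Des_WI u \<subseteq> Des \<pi>"
  proof -
    have "Des_WI u \<subseteq> Des \<pi> \<longleftrightarrow> (\<forall>i. Suc i < length \<pi> \<longrightarrow> u!i = u!Suc i \<longrightarrow> \<pi>!Suc i < \<pi>!i)"
    proof
      assume h: "Des_WI u \<subseteq> Des \<pi>"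
      show "\<forall>i. Suc i < length \<pi> \<longrightarrow> u!i = u!Suc i \<longrightarrow> \<pi>!Suc i < \<pi>!i"
      proof (intro allI impI)
        fix i assume "Suc i < length \<pi>" "u!i = u!Suc i"
        then have "Suc i \<in> Des_WI u" unfolding Des_WI_def using l by simp
        then have "Suc i \<in> Des \<pi>" using h by blast
        then show "\<pi>!Suc i < \<pi>!i" unfolding Des_def by simp
      qed
    next
      assume h: "\<forall>i. Suc i < length \<pi> \<longrightarrow> u!i = u!Suc i \<longrightarrow> \<pi>!Suc i < \<pi>!i"
      show "Des_WI u \<subseteq> Des \<pi>"
      proof
        fix i assume "i \<in> Des_WI u"
        then have i: "1 \<le> i" "i < length u" "u!(i-1) = u!i" unfolding Des_WI_def by auto
        then obtain k where k: "i = Suc k" by (cases i) auto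
        then have "\<pi>!Suc k < \<pi>!k" using h i l by simp
        then show "i \<in> Des \<pi>" unfolding Des_def using i k l by simp
      qed
    qed
    then show ?thesis unfolding sorted_iff_nth_Suc using l by simp
  qed
  finally show ?thesis .
qed

definition idx :: "nat list \<Rightarrow> nat \<Rightarrow> nat" where
  "idx p j = (THE i. i < length p \<and> p ! i = j)"

lemma idx1: assumes "distinct p" "j \<in> set p" shows "idx p j < length p \<and> p ! idx p j = j"
  unfolding idx_def using theI'[OF distinct_Ex1[OF assms]] .

lemma idx2: assumes "distinct p" "i < length p" shows "idx p (p ! i) = i"
  unfolding idx_def using assms by (intro the_equality) (auto simp: nth_eq_iff_index_eq)

lemma perm_inv_eq: "perm_inv p = map (\<lambda>j. Suc (idx p j)) [1..<Suc (length p)]"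
  unfolding perm_inv_def idx_def ..

lemma fish_eq:
  assumes d: "distinct \<pi>" and s: "set \<pi> = {1..n}" and l: "length u = n"
  shows "snd (burge_T u \<pi>) = map (\<lambda>j. u ! idx \<pi> j) [1..<Suc n]"
proof -
  have lp: "length \<pi> = n" using perm_len[OF d s] .
  let ?T = "map (\<lambda>j. (j, u ! idx \<pi> j)) [1..<Suc n]"
  have z: "zip \<pi> u = map (\<lambda>j. (j, u ! idx \<pi> j)) \<pi>"
    by (rule nth_equalityI) (auto simp: lp l idx2[OF d])
  have ms: "mset (zip \<pi> u) = mset ?T" unfolding z using perm_mset[OF d s] by (metis mset_map)
  have inj: "inj_on K (set (zip \<pi> u))" by (auto simp: inj_on_def K_def)
  have so: "sorted (map K ?T)" unfolding sorted_iff_nth_Suc by (auto simp: K_def less_eq_prod_def nth_append simp del: upt_Suc)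
  have "sort_key K (zip \<pi> u) = ?T" using sort_key_inj_key_eq[OF ms inj so] .
  moreover have "burge_T u \<pi> = (map fst (sort_key K (zip \<pi> u)), map snd (sort_key K (zip \<pi> u)))"
    unfolding burge_T_def K_def by (simp add: Let_def)
  ultimately show ?thesis by (simp add: o_def del: upt_Suc)
qed
lemma length_gamma: "length (gamma x) = length x"
  unfolding gamma_eq by (simp del: upt_Suc)

lemma zip_form: "map (\<lambda>j. (x!(j-1), j)) \<pi> = zip (map (\<lambda>j. x!(j-1)) \<pi>) \<pi>"
  by (rule nth_equalityI) auto

lemma G2:
  assumes len: "length x = n" and d: "distinct \<pi>" and s: "set \<pi> = {1..n}"
  shows "gamma x = \<pi> \<longleftrightarrow> sorted (map (\<lambda>j. x!(j-1)) \<pi>) \<and> Des_WI (map (\<lambda>j. x!(j-1)) \<pi>) \<subseteq> Des \<pi>"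
proof -
  have "gamma x = \<pi> \<longleftrightarrow> sorted (map K (zip (map (\<lambda>j. x!(j-1)) \<pi>) \<pi>))"
    using G[OF assms] zip_form[of x \<pi>] by metis
  then show ?thesis using sortedK[of "map (\<lambda>j. x!(j-1)) \<pi>" \<pi>] d by simp
qed

lemma back1:
  assumes d: "distinct \<pi>" and s: "set \<pi> = {1..n}" and l: "length x = n"
  shows "map (\<lambda>j. map (\<lambda>j. x!(j-1)) \<pi> ! idx \<pi> j) [1..<Suc n] = x"
proof (rule nth_equalityI)
  show "length (map (\<lambda>j. map (\<lambda>j. x!(j-1)) \<pi> ! idx \<pi> j) [1..<Suc n]) = length x" using l by simp
  fix k assume "k < length (map (\<lambda>j. map (\<lambda>j. x!(j-1)) \<pi> ! idx \<pi> j) [1..<Suc n])"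
  then have k: "k < n" by (simp del: upt_Suc)
  then have "Suc k \<in> set \<pi>" using s by simp
  from idx1[OF d this] have "idx \<pi> (Suc k) < length \<pi>" "\<pi> ! idx \<pi> (Suc k) = Suc k" by auto
  then show "map (\<lambda>j. map (\<lambda>j. x!(j-1)) \<pi> ! idx \<pi> j) [1..<Suc n] ! k = x ! k"
    using k by (simp add: nth_append del: upt_Suc)
qed

lemma back2:
  assumes d: "distinct \<pi>" and s: "set \<pi> = {1..n}" and l: "length u = n"
  shows "map (\<lambda>j. map (\<lambda>j. u ! idx \<pi> j) [1..<Suc n] ! (j-1)) \<pi> = u"
proof (rule nth_equalityI)
  have lp: "length \<pi> = n" using perm_len[OF d s] .
  show "length (map (\<lambda>j. map (\<lambda>j. u ! idx \<pi> j) [1..<Suc n] ! (j-1)) \<pi>) = length u" using l lp by simp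
  fix i assume "i < length (map (\<lambda>j. map (\<lambda>j. u ! idx \<pi> j) [1..<Suc n] ! (j-1)) \<pi>)"
  then have i: "i < n" using lp by simp
  then have "\<pi>!i \<in> {1..n}" using s lp nth_mem by blast
  then have "\<pi>!i - 1 < n" "Suc (\<pi>!i - 1) = \<pi>!i" by auto
  then show "map (\<lambda>j. map (\<lambda>j. u ! idx \<pi> j) [1..<Suc n] ! (j-1)) \<pi> ! i = u ! i"
    using i lp idx2[OF d] by (simp del: upt_Suc)
qed

lemma set_sub: assumes "\<And>j. j \<in> set L \<Longrightarrow> g j < length u" shows "set (map (\<lambda>j. u ! g j) L) \<subseteq> set u"
  using assms by auto

lemma Cay_iff: "x \<in> Cay \<longleftrightarrow> is_cayley x"
  unfolding Cay_def Cay_n_def by auto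

lemma WI_iff: "u \<in> WI_of p \<longleftrightarrow> length u = length p \<and> is_cayley u \<and> sorted u \<and> Des_WI u \<subseteq> Des p"
  unfolding WI_of_def WI_n_def Cay_n_def by auto

lemma cay_set: "set x = set y \<Longrightarrow> is_cayley x \<longleftrightarrow> is_cayley y"
  unfolding is_cayley_def by simp

lemma part1: "cay_class y = fishburn_basis (gamma y)"
proof -
  define n where "n = length y"
  define \<pi> where "\<pi> = gamma y"
  have d: "distinct \<pi>" and s: "set \<pi> = {1..n}" using gamma_perm[of y] unfolding \<pi>_def n_def by auto
  have lp: "length \<pi> = n" using perm_len[OF d s] .
  have FB: "fishburn_basis \<pi> = {map (\<lambda>j. u ! idx \<pi> j) [1..<Suc n] | u. u \<in> WI_of \<pi>}"
    unfolding fishburn_basis_def using fish_eq[OF d s] WI_iff lp by metis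
  have "cay_class y = {map (\<lambda>j. u ! idx \<pi> j) [1..<Suc n] | u. u \<in> WI_of \<pi>}"
  proof (intro equalityI subsetI)
    fix x assume "x \<in> cay_class y"
    then have c: "is_cayley x" and g: "gamma x = \<pi>" unfolding cay_class_def \<pi>_def Cay_iff by auto
    have l: "length x = n" using g length_gamma[of x] lp by simp
    define u where "u = map (\<lambda>j. x!(j-1)) \<pi>"
    have su: "sorted u \<and> Des_WI u \<subseteq> Des \<pi>" using G2[OF l d s] g unfolding u_def by simp
    have xu: "map (\<lambda>j. u ! idx \<pi> j) [1..<Suc n] = x" using back1[OF d s l] unfolding u_def .
    have "set u \<subseteq> set x" unfolding u_def using s l by (intro set_sub) auto
    moreover have "set x \<subseteq> set u" unfolding xu[symmetric]
      using idx1[OF d] s lp u_def by (intro set_sub) auto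
    ultimately have "is_cayley u" using c cay_set by blast
    then have "u \<in> WI_of \<pi>" using su WI_iff lp u_def by simp
    then show "x \<in> {map (\<lambda>j. u ! idx \<pi> j) [1..<Suc n] | u. u \<in> WI_of \<pi>}" using xu by blast
  next
    fix x assume "x \<in> {map (\<lambda>j. u ! idx \<pi> j) [1..<Suc n] | u. u \<in> WI_of \<pi>}"
    then obtain u where u: "u \<in> WI_of \<pi>" and xd: "x = map (\<lambda>j. u ! idx \<pi> j) [1..<Suc n]" by blast
    have lu: "length u = n" and cu: "is_cayley u" and su: "sorted u \<and> Des_WI u \<subseteq> Des \<pi>"
      using u WI_iff lp by auto
    have l: "length x = n" using xd by simp
    have ux: "map (\<lambda>j. x!(j-1)) \<pi> = u" using back2[OF d s lu] xd by simp
    have g: "gamma x = \<pi>" using G2[OF l d s] ux su by simp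
    have "set x \<subseteq> set u" unfolding xd
      using idx1[OF d] s lp lu by (intro set_sub) auto
    moreover have "set u \<subseteq> set x" unfolding ux[symmetric] using s l by (intro set_sub) auto
    ultimately have "is_cayley x" using cu cay_set by blast
    then show "x \<in> cay_class y" using g unfolding cay_class_def \<pi>_def Cay_iff by simp
  qed
  then show ?thesis using FB \<pi>_def by simp
qed

lemma part2:
  assumes p: "is_perm \<sigma>"
  shows "fishburn_basis \<sigma> = cay_class (perm_inv \<sigma>)"
proof -
  define n where "n = length \<sigma>"
  have d: "distinct \<sigma>" and s: "set \<sigma> = {1..n}" using p unfolding is_perm_def n_def by auto
  define y where "y = perm_inv \<sigma>"
  have yd: "y = map (\<lambda>j. Suc (idx \<sigma> j)) [1..<Suc n]" unfolding y_def perm_inv_eq n_def ..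
  have l: "length y = n" unfolding yd by simp
  have m: "map (\<lambda>j. y!(j-1)) \<sigma> = map Suc [0..<n]"
  proof (rule nth_equalityI)
    show "length (map (\<lambda>j. y!(j-1)) \<sigma>) = length (map Suc [0..<n])" using n_def by simp
    fix i assume "i < length (map (\<lambda>j. y!(j-1)) \<sigma>)"
    then have i: "i < n" using n_def by simp
    then have "\<sigma>!i \<in> {1..n}" using s n_def nth_mem by blast
    then have "\<sigma>!i - 1 < n" "Suc (\<sigma>!i - 1) = \<sigma>!i" by auto
    then show "map (\<lambda>j. y!(j-1)) \<sigma> ! i = map Suc [0..<n] ! i"
      using i n_def idx2[OF d] unfolding yd by (simp del: upt_Suc)
  qed
  have "Des_WI (map Suc [0..<n]) = {}" unfolding Des_WI_def by auto
  moreover have "sorted (map Suc [0..<n])" by (simp add: sorted_iff_nth_Suc)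
  ultimately have "sorted (map (\<lambda>j. y!(j-1)) \<sigma>) \<and> Des_WI (map (\<lambda>j. y!(j-1)) \<sigma>) \<subseteq> Des \<sigma>"
    unfolding m by simp
  then have g: "gamma y = \<sigma>" using G2[OF l d s] by blast
  have "set y \<subseteq> {1..n}"
  proof
    fix k assume "k \<in> set y"
    then have "k \<in> (\<lambda>j. Suc (idx \<sigma> j)) ` {1..n}" unfolding yd
      by (simp only: set_map set_upt atLeastLessThanSuc_atLeastAtMost)
    then obtain j where j: "j \<in> {1..n}" "k = Suc (idx \<sigma> j)" by blast
    then have "idx \<sigma> j < n" using idx1[OF d, of j] s n_def by simp
    then show "k \<in> {1..n}" using j by simp
  qed
  moreover have "{1..n} \<subseteq> set y"
  proof
    fix k assume "k \<in> {1..n}"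
    then have "k \<in> set (map Suc [0..<n])" by (auto simp: image_iff intro: bexI[of _ "k - 1"])
    then have "k \<in> set (map (\<lambda>j. y!(j-1)) \<sigma>)" using m by simp
    then obtain j where "j \<in> set \<sigma>" "k = y!(j-1)" by auto
    moreover have "j - 1 < length y" using \<open>j \<in> set \<sigma>\<close> s l by auto
    ultimately show "k \<in> set y" by simp
  qed
  ultimately have sy: "set y = {1..n}" by blast
  have "Max (insert 0 {1..n}) = n"
    by (rule Max_eqI) auto
  then have "is_cayley y" unfolding is_cayley_def sy by simp
  then have "y \<in> Cay" using Cay_iff by simp
  then show ?thesis using part1[of y] g y_def by simp
qed

theorem lemma4p10:
  shows "(\<forall>y \<in> Cay. cay_class y = fishburn_basis (gamma y))
       \<and> (\<forall>\<sigma>. is_perm \<sigma> \<longrightarrow> fishburn_basis \<sigma> = cay_class (perm_inv \<sigma>))"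
  using part1 part2 by blast

end
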